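(* Let $(Y^*,Y,X)$ be random variables with $Y^*\in\{0,1\}$ (true, unobserved outcome), $Y\in\{0,1\}$ (observed, possibly misreported outcome) and $X=(\tilde X,Z)\in\mathcal X$, where $\tilde X\in\tilde{\mathcal X}$ and $Z$ takes values in a finite set $\mathcal Z=\{z_1,\dots,z_k\}$. Write $p(x)=\Pr(Y=1\mid X=x)$, $p^*(x)=\Pr(Y^*=1\mid X=x)$, $p(\tilde x,z)=p(x)$ for $x=(\tilde x,z)$, and $$\underline{p}_z(\tilde x)=\inf_{z\in\mathcal Z}p(\tilde x,z),\qquad \bar p_z(\tilde x)=\sup_{z\in\mathcal Z}p(\tilde x,z).$$ Assume: (i) (Exclusion) for every $x=(\tilde x,z)\in\mathcal X$ and $y\in\{0,1\}$, $\Pr(Y=1-y\mid Y^*=y,X=x)=\Pr(Y=1-y\mid Y^*=y,\tilde X=\tilde x)$; (ii) (Degree of misreporting) for every $\tilde x\in\tilde{\mathcal X}$, $\Pr(Y=0\mid Y^*=1,\tilde x)+\Pr(Y=1\mid Y^*=0,\tilde x)\le 1$; (iii) (Boundary condition) for every $\tilde x\in\tilde{\mathcal X}$, $\bar p_z(\tilde x)>0$ and $\underline p_z(\tilde x)<1$. Then for every $x=(\tilde x,z)\in\mathcal X$, $p^*(x)\in[L_1(x),U_1(x)]$, where $$L_1(x)=\frac{p(x)-\underline p_z(\tilde x)}{1-\underline p_z(\tilde x)},\qquad U_1(x)=\frac{p(x)}{\bar p_z(\tilde x)},$$ and these bounds are sharp (no tighter bounds on $p^*(x)$ are implied by the assumptions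 and the distribution of the observed variables $(Y,X)$).
   Context: $Z$ is an instrument affecting the true outcome but not the misreporting probabilities $\Pr(Y=1-y\mid Y^*=y,\cdot)$. Conditioning on $\tilde x$ means conditioning on $\tilde X=\tilde x$. *)

theory Defs
  imports "HOL-Probability.Probability"
begin

text \<open>Outcomes are booleans (True = 1). For each covariate value
  x = (xt, z), K x is the conditional joint law of (Y*, Y) given X = x;
  the first component is the true outcome Y*, the second the observed Y.\<close>

definition pstar :: "('x \<Rightarrow> (bool \<times> bool) pmf) \<Rightarrow> 'x \<Rightarrow> real" where
  "pstar K x = measure_pmf.prob (K x) {w. fst w}"

definition pobs :: "('x \<Rightarrow> (bool \<times> bool) pmf) \<Rightarrow> 'x \<Rightarrow> real" where
  "pobs K x = measure_pmf.prob (K x) {w. snd w}"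

definition ptrue :: "('x \<Rightarrow> (bool \<times> bool) pmf) \<Rightarrow> 'x \<Rightarrow> bool \<Rightarrow> real" where
  "ptrue K x y = measure_pmf.prob (K x) {w. fst w = y}"

definition pmisjoint :: "('x \<Rightarrow> (bool \<times> bool) pmf) \<Rightarrow> 'x \<Rightarrow> bool \<Rightarrow> real" where
  "pmisjoint K x y = measure_pmf.prob (K x) {w. fst w = y \<and> snd w = (\<not> y)}"

text \<open>Misreporting model: m y xt = Pr(Y = 1 - y | Y* = y, Xt = xt).
  (i) Exclusion: Pr(Y = 1-y | Y* = y, X = (xt,z)) = m y xt for all z, written
  multiplicatively so that it is meaningful also when Pr(Y* = y | X = x) = 0;
  (ii) degree of misreporting: m 1 xt + m 0 xt \<le> 1.\<close>
definition misreport_model ::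
  "'a set \<Rightarrow> 'z set \<Rightarrow> ('a \<times> 'z \<Rightarrow> (bool \<times> bool) pmf) \<Rightarrow> (bool \<Rightarrow> 'a \<Rightarrow> real) \<Rightarrow> bool" where
  "misreport_model Xt Zs K m \<longleftrightarrow>
     (\<forall>xt\<in>Xt. \<forall>y. 0 \<le> m y xt \<and> m y xt \<le> 1) \<and>
     (\<forall>xt\<in>Xt. \<forall>z\<in>Zs. \<forall>y. pmisjoint K (xt, z) y = ptrue K (xt, z) y * m y xt) \<and>
     (\<forall>xt\<in>Xt. m True xt + m False xt \<le> 1)"

definition plow :: "('a \<times> 'z \<Rightarrow> real) \<Rightarrow> 'z set \<Rightarrow> 'a \<Rightarrow> real" where
  "plow p Zs xt = Inf ((\<lambda>z. p (xt, z)) ` Zs)"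

definition phigh :: "('a \<times> 'z \<Rightarrow> real) \<Rightarrow> 'z set \<Rightarrow> 'a \<Rightarrow> real" where
  "phigh p Zs xt = Sup ((\<lambda>z. p (xt, z)) ` Zs)"

definition L1 :: "('a \<times> 'z \<Rightarrow> real) \<Rightarrow> 'z set \<Rightarrow> 'a \<times> 'z \<Rightarrow> real" where
  "L1 p Zs x = (p x - plow p Zs (fst x)) / (1 - plow p Zs (fst x))"

definition U1 :: "('a \<times> 'z \<Rightarrow> real) \<Rightarrow> 'z set \<Rightarrow> 'a \<times> 'z \<Rightarrow> real" where
  "U1 p Zs x = p x / phigh p Zs (fst x)"

end

theory Submission imports Defs begin

lemma prob_bb: "measure_pmf.prob M A = (\<Sum>w\<in>A. pmf M w)" for M :: "(bool\<times>bool) pmf"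
  by (rule measure_measure_pmf_finite) simp

lemma decomp:
  fixes M :: "(bool\<times>bool) pmf"
  shows "measure_pmf.prob M {w. fst w} = pmf M (True,True) + pmf M (True,False)"
    and "measure_pmf.prob M {w. snd w} = pmf M (True,True) + pmf M (False,True)"
    and "measure_pmf.prob M {w. fst w = y} = (if y then pmf M (True,True) + pmf M (True,False) else pmf M (False,True) + pmf M (False,False))"
    and "measure_pmf.prob M {w. fst w = y \<and> snd w = (\<not> y)} = (if y then pmf M (True,False) else pmf M (False,True))"
    and "pmf M (True,True) + pmf M (True,False) + pmf M (False,True) + pmf M (False,False) = 1"
proof -
  have u: "(UNIV :: (bool\<times>bool) set) = {(True,True),(True,False),(False,True),(False,False)}"
    by auto
  have "(\<Sum>w\<in>UNIV. pmf M w) = 1" by (rule sum_pmf_eq_1) auto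
  then show "pmf M (True,True) + pmf M (True,False) + pmf M (False,True) + pmf M (False,False) = 1"
    by (simp add: u)
  have "{w::bool\<times>bool. fst w} = {(True,True),(True,False)}" by auto
  then show "measure_pmf.prob M {w. fst w} = pmf M (True,True) + pmf M (True,False)"
    by (simp add: prob_bb)
  have "{w::bool\<times>bool. snd w} = {(True,True),(False,True)}" by auto
  then show "measure_pmf.prob M {w. snd w} = pmf M (True,True) + pmf M (False,True)"
    by (simp add: prob_bb)
  have "{w::bool\<times>bool. fst w = y} = (if y then {(True,True),(True,False)} else {(False,True),(False,False)})" by auto
  then show "measure_pmf.prob M {w. fst w = y} = (if y then pmf M (True,True) + pmf M (True,False) else pmf M (False,True) + pmf M (False,False))"
    by (simp add: prob_bb)
  have "{w::bool\<times>bool. fst w = y \<and> snd w = (\<not> y)} = (if y then {(True,False)} else {(False,True)})" by auto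
  then show "measure_pmf.prob M {w. fst w = y \<and> snd w = (\<not> y)} = (if y then pmf M (True,False) else pmf M (False,True))"
    by (simp add: prob_bb)
qed

lemma mk:
  fixes s a b :: real
  assumes "0 \<le> s" "s \<le> 1" "0 \<le> a" "a \<le> 1" "0 \<le> b" "b \<le> 1"
  shows "\<exists>M :: (bool\<times>bool) pmf. pmf M (True,True) = s*(1-a) \<and> pmf M (True,False) = s*a
     \<and> pmf M (False,True) = (1-s)*b \<and> pmf M (False,False) = (1-s)*(1-b)"
proof -
  define f where "f = (\<lambda>w::bool\<times>bool. if fst w then s*(if snd w then 1-a else a) else (1-s)*(if snd w then b else 1-b))"
  have nn: "\<And>x. 0 \<le> f x" using assms by (auto simp: f_def)
  have u: "(UNIV :: (bool\<times>bool) set) = {(True,True),(True,False),(False,True),(False,False)}"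
    by auto
  have "(\<integral>\<^sup>+x. f x \<partial>count_space UNIV) = (\<Sum>x\<in>UNIV. ennreal (f x))"
    by (simp add: nn_integral_count_space_finite)
  also have "\<dots> = ennreal (\<Sum>x\<in>UNIV. f x)"
    using nn by (simp add: sum_ennreal)
  also have "(\<Sum>x\<in>UNIV. f x) = 1" by (simp add: u f_def algebra_simps)
  finally have pr: "(\<integral>\<^sup>+x. f x \<partial>count_space UNIV) = 1" by simp
  show ?thesis
    by (rule exI[of _ "embed_pmf f"]) (simp only: pmf_embed_pmf[OF nn pr], simp add: f_def)
qed


lemma obs_eq:
  assumes model: "misreport_model Xt Zs K m" and xt: "xt \<in> Xt" and z: "z \<in> Zs"
  shows "pobs K (xt,z) = pstar K (xt,z) * (1 - m True xt) + (1 - pstar K (xt,z)) * m False xt"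
    and "0 \<le> pstar K (xt,z)" "pstar K (xt,z) \<le> 1" "0 \<le> pobs K (xt,z)" "pobs K (xt,z) \<le> 1"
proof -
  let ?M = "K (xt,z)"
  have e1: "pmisjoint K (xt,z) True = ptrue K (xt,z) True * m True xt"
   and e0: "pmisjoint K (xt,z) False = ptrue K (xt,z) False * m False xt"
    using model xt z unfolding misreport_model_def by blast+
  note d = decomp[of ?M]
  have "pmf ?M (True,False) = (pmf ?M (True,True) + pmf ?M (True,False)) * m True xt"
    using e1 unfolding pmisjoint_def ptrue_def d(3)[of True] d(4)[of True] by simp
  moreover have "pmf ?M (False,True) = (pmf ?M (False,True) + pmf ?M (False,False)) * m False xt"
    using e0 unfolding pmisjoint_def ptrue_def d(3)[of False] d(4)[of False] by simp
  moreover have "pmf ?M (False,True) + pmf ?M (False,False) = 1 - pstar K (xt,z)"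
    using d(5) unfolding pstar_def d(1) by linarith
  ultimately have h1: "pmf ?M (True,False) = pstar K (xt,z) * m True xt"
    and h2: "pmf ?M (False,True) = (1 - pstar K (xt,z)) * m False xt"
    unfolding pstar_def d by simp_all
  have "pobs K (xt,z) = pstar K (xt,z) - pmf ?M (True,False) + pmf ?M (False,True)"
    unfolding pobs_def pstar_def d by simp
  then show "pobs K (xt,z) = pstar K (xt,z) * (1 - m True xt) + (1 - pstar K (xt,z)) * m False xt"
    using h1 h2 by (simp add: algebra_simps)
  show "0 \<le> pstar K (xt,z)" "pstar K (xt,z) \<le> 1" "0 \<le> pobs K (xt,z)" "pobs K (xt,z) \<le> 1"
    unfolding pstar_def pobs_def by auto
qed

theorem proposition1:
  fixes Xt :: "'a set" and Zs :: "'z set"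
    and K :: "'a \<times> 'z \<Rightarrow> (bool \<times> bool) pmf" and m :: "bool \<Rightarrow> 'a \<Rightarrow> real"
  assumes finZ: "finite Zs" and neZ: "Zs \<noteq> {}"
    and model: "misreport_model Xt Zs K m"
    and boundary: "\<forall>xt\<in>Xt. phigh (pobs K) Zs xt > 0 \<and> plow (pobs K) Zs xt < 1"
  shows "\<forall>x\<in>Xt \<times> Zs.
           L1 (pobs K) Zs x \<le> pstar K x \<and> pstar K x \<le> U1 (pobs K) Zs x \<and>
           (\<forall>t. L1 (pobs K) Zs x \<le> t \<and> t \<le> U1 (pobs K) Zs x \<longrightarrow>
              (\<exists>K' m'. misreport_model Xt Zs K' m' \<and>
                 (\<forall>x'\<in>Xt \<times> Zs. pobs K' x' = pobs K x') \<and>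
                 pstar K' x = t))"
proof
  fix x assume "x \<in> Xt \<times> Zs"
  then obtain xt0 z0 where x: "x = (xt0, z0)" and xt0: "xt0 \<in> Xt" and z0: "z0 \<in> Zs" by auto
  define P where "P = (\<lambda>z. pobs K (xt0, z))"
  define lo where "lo = plow (pobs K) Zs xt0"
  define hi where "hi = phigh (pobs K) Zs xt0"
  define a where "a = m True xt0"
  define b where "b = m False xt0"
  have lo_min: "lo = Min (P ` Zs)" unfolding lo_def plow_def P_def
    using finZ neZ by (simp add: cInf_eq_Min)
  have hi_max: "hi = Max (P ` Zs)" unfolding hi_def phigh_def P_def
    using finZ neZ by (simp add: cSup_eq_Max)
  have lo_le: "lo \<le> P z" if "z \<in> Zs" for z using that finZ by (simp add: lo_min)
  have hi_ge: "P z \<le> hi" if "z \<in> Zs" for z using that finZ by (simp add: hi_max)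
  have "lo \<in> P ` Zs" using finZ neZ lo_min by simp
  then obtain zl where zl: "zl \<in> Zs" "lo = P zl" by auto
  have "hi \<in> P ` Zs" using finZ neZ hi_max by simp
  then obtain zh where zh: "zh \<in> Zs" "hi = P zh" by auto
  have hipos: "hi > 0" and lo1: "lo < 1" using boundary xt0 by (auto simp: lo_def hi_def)
  have ab: "0 \<le> a" "a \<le> 1" "0 \<le> b" "b \<le> 1" "a + b \<le> 1"
    using model xt0 unfolding misreport_model_def a_def b_def by auto
  have Peq: "P z = pstar K (xt0,z) * (1 - a) + (1 - pstar K (xt0,z)) * b" if "z \<in> Zs" for z
    using obs_eq(1)[OF model xt0 that] by (simp add: P_def a_def b_def)
  have P01: "0 \<le> P z" "P z \<le> 1" if "z \<in> Zs" for z
    using obs_eq(4,5)[OF model xt0 that] by (auto simp: P_def)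
  have s01: "0 \<le> pstar K (xt0,z)" "pstar K (xt0,z) \<le> 1" if "z \<in> Zs" for z
    using obs_eq(2,3)[OF model xt0 that] by auto
  have b_le: "b \<le> P z" if "z \<in> Zs" for z
  proof -
    have "P z - b = pstar K (xt0,z) * (1 - a - b)" using Peq[OF that] by (simp add: algebra_simps)
    moreover have "0 \<le> pstar K (xt0,z) * (1 - a - b)" using s01[OF that] ab by simp
    ultimately show ?thesis by linarith
  qed
  have a_le: "P z \<le> 1 - a" if "z \<in> Zs" for z
  proof -
    have "1 - a - P z = (1 - pstar K (xt0,z)) * (1 - a - b)" using Peq[OF that] by (simp add: algebra_simps)
    moreover have "0 \<le> (1 - pstar K (xt0,z)) * (1 - a - b)" using s01[OF that] ab by simp
    ultimately show ?thesis by linarith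
  qed
  have blo: "b \<le> lo" using b_le zl by simp
  have hia: "hi \<le> 1 - a" using a_le zh by simp
  define s where "s = pstar K x"
  have s01': "0 \<le> s" "s \<le> 1" using s01[OF z0] by (auto simp: s_def x)
  have Ps: "P z0 = s * (1 - a) + (1 - s) * b" using Peq[OF z0] by (simp add: s_def x)
  have L1eq: "L1 (pobs K) Zs x = (P z0 - lo) / (1 - lo)"
    by (simp add: L1_def x P_def lo_def)
  have U1eq: "U1 (pobs K) Zs x = P z0 / hi"
    by (simp add: U1_def x P_def hi_def)
  have part1: "L1 (pobs K) Zs x \<le> pstar K x"
  proof -
    have "P z0 - lo - s * (1 - lo) = -(s*a) - (1 - s) * (lo - b)" by (simp add: Ps algebra_simps)
    moreover have "0 \<le> s * a" "0 \<le> (1 - s) * (lo - b)" using s01' ab blo by auto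
    ultimately have "P z0 - lo \<le> s * (1 - lo)" by linarith
    then show ?thesis using lo1 by (simp add: L1eq divide_le_eq s_def)
  qed
  have part2: "pstar K x \<le> U1 (pobs K) Zs x"
  proof -
    have "P z0 - s * hi = s * (1 - a - hi) + (1 - s) * b" by (simp add: Ps algebra_simps)
    moreover have "0 \<le> s * (1 - a - hi)" "0 \<le> (1 - s) * b" using s01' ab hia by auto
    ultimately have "s * hi \<le> P z0" by linarith
    then show ?thesis using hipos by (simp add: U1eq le_divide_eq s_def)
  qed
  show "L1 (pobs K) Zs x \<le> pstar K x \<and> pstar K x \<le> U1 (pobs K) Zs x \<and>
           (\<forall>t. L1 (pobs K) Zs x \<le> t \<and> t \<le> U1 (pobs K) Zs x \<longrightarrow>
              (\<exists>K' m'. misreport_model Xt Zs K' m' \<and>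
                 (\<forall>x'\<in>Xt \<times> Zs. pobs K' x' = pobs K x') \<and>
                 pstar K' x = t))"
  proof (intro conjI part1 part2 allI impI)
    fix t assume "L1 (pobs K) Zs x \<le> t \<and> t \<le> U1 (pobs K) Zs x"
    then have tL: "(P z0 - lo) / (1 - lo) \<le> t" and tU: "t \<le> P z0 / hi" by (auto simp: L1eq U1eq)
    have tL': "P z0 - lo \<le> t * (1 - lo)" using tL lo1 by (simp add: divide_le_eq)
    have tU': "t * hi \<le> P z0" using tU hipos by (simp add: le_divide_eq)
    have lo0: "0 \<le> lo" using P01 zl by simp
    have hi1: "hi \<le> 1" using P01 zh by simp
    have "0 \<le> t * (1 - lo)" using tL' lo_le[OF z0] by linarith
    then have t0: "0 \<le> t" using lo1 by (simp add: zero_le_mult_iff)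
    obtain a' b' where a'b': "0 \<le> a'" "0 \<le> b'" "a' + b' < 1" "b' \<le> lo" "hi \<le> 1 - a'"
      "P z0 = b' + t * (1 - a' - b')"
    proof (cases "t \<le> P z0")
      case True
      show ?thesis
      proof (cases "t < 1")
        case True
        define b' where "b' = (P z0 - t) / (1 - t)"
        have "b' * (1 - t) = P z0 - t" using True by (simp add: b'_def)
        moreover have "0 \<le> b'" using True \<open>t \<le> P z0\<close> by (simp add: b'_def)
        moreover have "b' \<le> lo" using True tL' by (simp add: b'_def divide_le_eq algebra_simps)
        ultimately show ?thesis using that[of 0 b'] lo1 hi1
          by (simp add: algebra_simps)
      next
        case False
        then have "t = 1" "P z0 = 1" using \<open>t \<le> P z0\<close> P01[OF z0] by auto
        then show ?thesis using that[of 0 0] lo0 hi1 by simp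
      qed
    next
      case False
      then have tpos: "0 < t" using P01[OF z0] by linarith
      have "0 < t * hi" using tpos hipos by simp
      then have Ppos: "0 < P z0" using tU' by linarith
      have q1: "P z0 / t \<le> 1" using False tpos by simp
      have q0: "0 < P z0 / t" using Ppos tpos by simp
      have qh: "hi \<le> P z0 / t" using tU' tpos by (simp add: le_divide_eq mult.commute)
      show ?thesis using that[of "1 - P z0 / t" 0] q1 q0 qh lo0 tpos by simp
    qed
    define c where "c = 1 - a' - b'"
    have cpos: "0 < c" using a'b' by (simp add: c_def)
    define sz where "sz = (\<lambda>z. (P z - b') / c)"
    have sz01: "0 \<le> sz z \<and> sz z \<le> 1" if "z \<in> Zs" for z
    proof -
      have "b' \<le> P z" "P z \<le> b' + c" using lo_le[OF that] hi_ge[OF that] a'b' by (auto simp: c_def)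
      then show ?thesis using cpos by (simp add: sz_def divide_le_eq)
    qed
    have szc: "sz z * c = P z - b'" for z using cpos by (simp add: sz_def)
    have "\<forall>z\<in>Zs. \<exists>M :: (bool\<times>bool) pmf. pmf M (True,True) = sz z*(1-a') \<and> pmf M (True,False) = sz z*a'
     \<and> pmf M (False,True) = (1-sz z)*b' \<and> pmf M (False,False) = (1-sz z)*(1-b')"
      using sz01 a'b' by (intro ballI mk) auto
    then obtain F where F: "\<And>z. z \<in> Zs \<Longrightarrow> pmf (F z) (True,True) = sz z*(1-a') \<and> pmf (F z) (True,False) = sz z*a'
     \<and> pmf (F z) (False,True) = (1-sz z)*b' \<and> pmf (F z) (False,False) = (1-sz z)*(1-b')"
      by metis
    define K' where "K' = (\<lambda>w. if fst w = xt0 \<and> snd w \<in> Zs then F (snd w) else K w)"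
    define m' where "m' = (\<lambda>y xt. if xt = xt0 then (if y then a' else b') else m y xt)"
    have K'0: "K' (xt0, z) = F z" if "z \<in> Zs" for z using that by (simp add: K'_def)
    have K'1: "K' (xt, z) = K (xt, z)" if "xt \<noteq> xt0" for xt z using that by (simp add: K'_def)
    have mm: "misreport_model Xt Zs K' m'"
      unfolding misreport_model_def
    proof (intro conjI ballI allI)
      fix xt y assume "xt \<in> Xt"
      then show "0 \<le> m' y xt" "m' y xt \<le> 1" using model a'b' unfolding misreport_model_def m'_def
        by auto
    next
      fix xt assume "xt \<in> Xt"
      then show "m' True xt + m' False xt \<le> 1" using model a'b' unfolding misreport_model_def m'_def
        by auto
    next
      fix xt z y assume xt: "xt \<in> Xt" and z: "z \<in> Zs"
      show "pmisjoint K' (xt, z) y = ptrue K' (xt, z) y * m' y xt"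
      proof (cases "xt = xt0")
        case True
        have F1: "pmf (F z) (True,True) = sz z*(1-a')" and F2: "pmf (F z) (True,False) = sz z*a'"
          and F3: "pmf (F z) (False,True) = (1-sz z)*b'" and F4: "pmf (F z) (False,False) = (1-sz z)*(1-b')"
          using F[OF z] by auto
        show ?thesis
          using True K'0[OF z] unfolding pmisjoint_def ptrue_def decomp
          by (cases y) (simp_all add: F1 F2 F3 F4 m'_def algebra_simps)
      next
        case False
        then show ?thesis using model xt z K'1[OF False] unfolding misreport_model_def m'_def
          by (simp add: pmisjoint_def ptrue_def)
      qed
    qed
    have obs: "\<forall>x'\<in>Xt \<times> Zs. pobs K' x' = pobs K x'"
    proof
      fix x' assume "x' \<in> Xt \<times> Zs"
      then obtain xt z where x': "x' = (xt, z)" "z \<in> Zs" by auto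
      show "pobs K' x' = pobs K x'"
      proof (cases "xt = xt0")
        case True
        have "pobs K' x' = sz z * (1 - a') + (1 - sz z) * b'"
          using F[OF x'(2)] K'0[OF x'(2)] True x'(1) by (simp add: pobs_def decomp)
        also have "\<dots> = b' + sz z * c" by (simp add: c_def algebra_simps)
        also have "\<dots> = P z" using szc[of z] by simp
        finally show ?thesis using True x' by (simp add: P_def)
      next
        case False
        then show ?thesis using K'1 x' by (simp add: pobs_def)
      qed
    qed
    have "sz z0 = t"
    proof -
      have "sz z0 * c = t * c" using szc[of z0] a'b'(6) by (simp add: c_def)
      then show ?thesis using cpos by simp
    qed
    then have "pstar K' x = t"
      using F[OF z0] K'0[OF z0] x by (simp add: pstar_def decomp algebra_simps)
    then show "\<exists>K' m'. misreport_model Xt Zs K' m' \<and>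
                 (\<forall>x'\<in>Xt \<times> Zs. pobs K' x' = pobs K x') \<and> pstar K' x = t"
      using mm obs by blast
  qed
qed

end
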